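(* Let $(\preceq_s)_{s\in S}$ be a finite family of WQOs on a set $X$ and let $\preceq$ be its conjunction ($x\preceq y$ iff $x\preceq_s y$ for all $s\in S$). Then $I\subseteq X$ is an ideal of $(X,\preceq)$ if and only if $I=\bigcap_{s\in S}I_s$, where each $I_s$ is an ideal of $(X,\preceq_s)$ and $(I_s)_{s\in S}\in\mathrm{Adh}_S(I)$.
   Context: An ideal of a WQO is a nonempty, downward closed, directed subset (directed: any two elements have a common upper bound in the set). For $L\subseteq X$, $\mathrm{Adh}_S(L)$ is the set of families $(I_s)_{s\in S}$ of ideals ($I_s$ an ideal of $\preceq_s$) for which there is a $\preceq$-directed set $D\subseteq L$ with $I_s=\downarrow_{\preceq_s}D$ for every $s\in S$. *)

theory Defs
  imports Main
begin

definition wqo_on :: "'a set \<Rightarrow> ('a \<Rightarrow> 'a \<Rightarrow> bool) \<Rightarrow> bool" where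
  "wqo_on X R \<longleftrightarrow>
     (\<forall>x\<in>X. R x x) \<and>
     (\<forall>x\<in>X. \<forall>y\<in>X. \<forall>z\<in>X. R x y \<longrightarrow> R y z \<longrightarrow> R x z) \<and>
     (\<forall>f :: nat \<Rightarrow> 'a. (\<forall>i. f i \<in> X) \<longrightarrow> (\<exists>i j. i < j \<and> R (f i) (f j)))"

definition conj_ord :: "'s set \<Rightarrow> ('s \<Rightarrow> 'a \<Rightarrow> 'a \<Rightarrow> bool) \<Rightarrow> 'a \<Rightarrow> 'a \<Rightarrow> bool" where
  "conj_ord S le x y \<longleftrightarrow> (\<forall>s\<in>S. le s x y)"

definition directed_on :: "('a \<Rightarrow> 'a \<Rightarrow> bool) \<Rightarrow> 'a set \<Rightarrow> bool" where
  "directed_on R D \<longleftrightarrow> D \<noteq> {} \<and> (\<forall>x\<in>D. \<forall>y\<in>D. \<exists>z\<in>D. R x z \<and> R y z)"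

definition down_cl :: "'a set \<Rightarrow> ('a \<Rightarrow> 'a \<Rightarrow> bool) \<Rightarrow> 'a set \<Rightarrow> 'a set" where
  "down_cl X R D = {x\<in>X. \<exists>d\<in>D. R x d}"

definition ideal_on :: "'a set \<Rightarrow> ('a \<Rightarrow> 'a \<Rightarrow> bool) \<Rightarrow> 'a set \<Rightarrow> bool" where
  "ideal_on X R I \<longleftrightarrow> I \<subseteq> X \<and> I \<noteq> {} \<and>
     (\<forall>x\<in>X. \<forall>y\<in>I. R x y \<longrightarrow> x \<in> I) \<and>
     (\<forall>x\<in>I. \<forall>y\<in>I. \<exists>z\<in>I. R x z \<and> R y z)"

text \<open>Adh_S(L): families of ideals (I_s)_{s in S} induced by a conj-directed D \<subseteq> L.
  Families are functions 's \<Rightarrow> 'a set; only the values on S matter.\<close>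
definition Adh :: "'a set \<Rightarrow> 's set \<Rightarrow> ('s \<Rightarrow> 'a \<Rightarrow> 'a \<Rightarrow> bool) \<Rightarrow> 'a set \<Rightarrow> ('s \<Rightarrow> 'a set) set" where
  "Adh X S le L = {Is. (\<forall>s\<in>S. ideal_on X (le s) (Is s)) \<and>
     (\<exists>D. D \<subseteq> L \<and> directed_on (conj_ord S le) D \<and>
          (\<forall>s\<in>S. Is s = down_cl X (le s) D))}"

end

theory Submission
  imports Defs
begin

lemma ub_exists:
  assumes "finite F" "F \<subseteq> D" "D \<noteq> {}"
    and dir: "\<forall>x\<in>D. \<forall>y\<in>D. \<exists>z\<in>D. R x z \<and> R y z"
    and tr: "\<forall>x\<in>D. \<forall>y\<in>D. \<forall>z\<in>D. R x y \<longrightarrow> R y z \<longrightarrow> R x z"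
  shows "\<exists>z\<in>D. \<forall>f\<in>F. R f z"
  using assms(1,2)
proof (induction F rule: finite_induct)
  case empty
  then show ?case using assms(3) by auto
next
  case (insert a F)
  then obtain z where z: "z \<in> D" "\<forall>f\<in>F. R f z" by auto
  have aD: "a \<in> D" using insert(4) by auto
  obtain w where w: "w \<in> D" "R a w" "R z w" using dir aD z(1) by blast
  have "\<forall>f\<in>F. R f w" using z w tr insert(4) by blast
  then show ?case using w by auto
qed

theorem mainTheorem10:
  fixes X :: "'a set" and S :: "'s set" and le :: "'s \<Rightarrow> 'a \<Rightarrow> 'a \<Rightarrow> bool"
    and I :: "'a set"
  assumes "finite S"
    and "\<forall>s\<in>S. wqo_on X (le s)"
  shows "ideal_on X (conj_ord S le) I \<longleftrightarrow>
    (\<exists>Is :: 's \<Rightarrow> 'a set.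
        (\<forall>s\<in>S. ideal_on X (le s) (Is s)) \<and>
        I = X \<inter> (\<Inter>s\<in>S. Is s) \<and>
        Is \<in> Adh X S le I)"
proof -
  have refl: "\<And>s x. s \<in> S \<Longrightarrow> x \<in> X \<Longrightarrow> le s x x"
    using assms(2) unfolding wqo_on_def by blast
  have trans: "\<And>s x y z. s \<in> S \<Longrightarrow> x \<in> X \<Longrightarrow> y \<in> X \<Longrightarrow> z \<in> X \<Longrightarrow> le s x y \<Longrightarrow> le s y z \<Longrightarrow> le s x z"
    using assms(2) unfolding wqo_on_def by blast
  have ctr: "\<And>x y z. x \<in> X \<Longrightarrow> y \<in> X \<Longrightarrow> z \<in> X \<Longrightarrow> conj_ord S le x y \<Longrightarrow> conj_ord S le y z \<Longrightarrow> conj_ord S le x z"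
    unfolding conj_ord_def using trans by blast
  show ?thesis
  proof
    assume id: "ideal_on X (conj_ord S le) I"
    hence IX: "I \<subseteq> X" and Ine: "I \<noteq> {}"
      and dc: "\<forall>x\<in>X. \<forall>y\<in>I. conj_ord S le x y \<longrightarrow> x \<in> I"
      and dir: "\<forall>x\<in>I. \<forall>y\<in>I. \<exists>z\<in>I. conj_ord S le x z \<and> conj_ord S le y z"
      unfolding ideal_on_def by auto
    have trI: "\<forall>x\<in>I. \<forall>y\<in>I. \<forall>z\<in>I. conj_ord S le x y \<longrightarrow> conj_ord S le y z \<longrightarrow> conj_ord S le x z"
      using ctr IX by (meson subsetD)
    define Is where "Is = (\<lambda>s. down_cl X (le s) I)"
    have ideals: "\<forall>s\<in>S. ideal_on X (le s) (Is s)"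
    proof
      fix s assume s: "s \<in> S"
      show "ideal_on X (le s) (Is s)"
        unfolding ideal_on_def
      proof (intro conjI)
        show "Is s \<subseteq> X" unfolding Is_def down_cl_def by auto
        show "Is s \<noteq> {}" using Ine IX refl s unfolding Is_def down_cl_def by blast
        show "\<forall>x\<in>X. \<forall>y\<in>Is s. le s x y \<longrightarrow> x \<in> Is s"
          unfolding Is_def down_cl_def using trans s IX by blast
        show "\<forall>x\<in>Is s. \<forall>y\<in>Is s. \<exists>z\<in>Is s. le s x z \<and> le s y z"
        proof (intro ballI)
          fix x y assume "x \<in> Is s" "y \<in> Is s"
          then obtain d1 d2 where d: "x \<in> X" "y \<in> X" "d1 \<in> I" "d2 \<in> I" "le s x d1" "le s y d2"
            unfolding Is_def down_cl_def by auto
          from dir d obtain z where z: "z \<in> I" "conj_ord S le d1 z" "conj_ord S le d2 z" by blast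
          have "le s x z" "le s y z" using z d s trans IX unfolding conj_ord_def by blast+
          moreover have "z \<in> Is s" using z IX refl s unfolding Is_def down_cl_def by blast
          ultimately show "\<exists>z\<in>Is s. le s x z \<and> le s y z" by blast
        qed
      qed
    qed
    have eq: "I = X \<inter> (\<Inter>s\<in>S. Is s)"
    proof
      show "I \<subseteq> X \<inter> (\<Inter>s\<in>S. Is s)"
        using IX refl unfolding Is_def down_cl_def by blast
      show "X \<inter> (\<Inter>s\<in>S. Is s) \<subseteq> I"
      proof
        fix x assume x: "x \<in> X \<inter> (\<Inter>s\<in>S. Is s)"
        hence "\<forall>s\<in>S. \<exists>d. d \<in> I \<and> le s x d" unfolding Is_def down_cl_def by auto
        from bchoice[OF this] obtain d where d: "\<forall>s\<in>S. d s \<in> I \<and> le s x (d s)" by blast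
        have fin: "finite (d ` S)" using assms(1) by simp
        have sub: "d ` S \<subseteq> I" using d by blast
        have "\<exists>z\<in>I. \<forall>f\<in>d ` S. conj_ord S le f z"
          by (rule ub_exists[OF fin sub Ine dir trI])
        then obtain z where z: "z \<in> I" "\<forall>s\<in>S. conj_ord S le (d s) z" by auto
        have "conj_ord S le x z" unfolding conj_ord_def
        proof
          fix s assume s: "s \<in> S"
          have "le s (d s) z" using z s unfolding conj_ord_def by blast
          moreover have "d s \<in> X" "z \<in> X" using d s z IX by auto
          ultimately show "le s x z" using trans[OF s, of x "d s" z] x d s by blast
        qed
        thus "x \<in> I" using dc x z by blast
      qed
    qed
    have "Is \<in> Adh X S le I"
      unfolding Adh_def directed_on_def using ideals Ine dir Is_def by auto
    thus "\<exists>Is. (\<forall>s\<in>S. ideal_on X (le s) (Is s)) \<and> I = X \<inter> (\<Inter>s\<in>S. Is s) \<and> Is \<in> Adh X S le I"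
      using ideals eq by blast
  next
    assume "\<exists>Is. (\<forall>s\<in>S. ideal_on X (le s) (Is s)) \<and> I = X \<inter> (\<Inter>s\<in>S. Is s) \<and> Is \<in> Adh X S le I"
    then obtain Is D where ideals: "\<forall>s\<in>S. ideal_on X (le s) (Is s)"
      and eq: "I = X \<inter> (\<Inter>s\<in>S. Is s)" and DI: "D \<subseteq> I"
      and dD: "directed_on (conj_ord S le) D" and IsD: "\<forall>s\<in>S. Is s = down_cl X (le s) D"
      unfolding Adh_def by blast
    have IX: "I \<subseteq> X" using eq by auto
    have DX: "D \<subseteq> X" using DI IX by auto
    have Dne: "D \<noteq> {}" and dirD: "\<forall>x\<in>D. \<forall>y\<in>D. \<exists>z\<in>D. conj_ord S le x z \<and> conj_ord S le y z"
      using dD unfolding directed_on_def by auto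
    have trD: "\<forall>x\<in>D. \<forall>y\<in>D. \<forall>z\<in>D. conj_ord S le x y \<longrightarrow> conj_ord S le y z \<longrightarrow> conj_ord S le x z"
      using ctr DX by (meson subsetD)
    show "ideal_on X (conj_ord S le) I"
      unfolding ideal_on_def
    proof (intro conjI)
      show "I \<subseteq> X" by fact
      show "I \<noteq> {}" using Dne DI by auto
      show "\<forall>x\<in>X. \<forall>y\<in>I. conj_ord S le x y \<longrightarrow> x \<in> I"
      proof (intro ballI impI)
        fix x y assume x: "x \<in> X" and y: "y \<in> I" and c: "conj_ord S le x y"
        have "\<forall>s\<in>S. x \<in> Is s"
        proof
          fix s assume s: "s \<in> S"
          have "y \<in> Is s" using y eq s by auto
          moreover have "le s x y" using c s unfolding conj_ord_def by auto
          ultimately show "x \<in> Is s" using ideals s x unfolding ideal_on_def by blast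
        qed
        thus "x \<in> I" using eq x by auto
      qed
      show "\<forall>x\<in>I. \<forall>y\<in>I. \<exists>z\<in>I. conj_ord S le x z \<and> conj_ord S le y z"
      proof (intro ballI)
        fix x y assume x: "x \<in> I" and y: "y \<in> I"
        have "\<forall>s\<in>S. \<exists>d. d \<in> D \<and> le s x d" using x eq IsD unfolding down_cl_def by auto
        from bchoice[OF this] obtain d1 where d1: "\<forall>s\<in>S. d1 s \<in> D \<and> le s x (d1 s)" by blast
        have "\<forall>s\<in>S. \<exists>d. d \<in> D \<and> le s y d" using y eq IsD unfolding down_cl_def by auto
        from bchoice[OF this] obtain d2 where d2: "\<forall>s\<in>S. d2 s \<in> D \<and> le s y (d2 s)" by blast
        have fin: "finite (d1 ` S \<union> d2 ` S)" using assms(1) by simp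
        have sub: "d1 ` S \<union> d2 ` S \<subseteq> D" using d1 d2 by blast
        have "\<exists>z\<in>D. \<forall>f\<in>d1 ` S \<union> d2 ` S. conj_ord S le f z"
          by (rule ub_exists[OF fin sub Dne dirD trD])
        then obtain z where z: "z \<in> D" "\<forall>s\<in>S. conj_ord S le (d1 s) z" "\<forall>s\<in>S. conj_ord S le (d2 s) z" by auto
        have "conj_ord S le x z" unfolding conj_ord_def
        proof
          fix s assume s: "s \<in> S"
          have "le s (d1 s) z" using z s unfolding conj_ord_def by blast
          moreover have "d1 s \<in> X" "z \<in> X" "x \<in> X" using d1 s z DX x IX by auto
          ultimately show "le s x z" using trans[OF s, of x "d1 s" z] d1 s by blast
        qed
        moreover have "conj_ord S le y z" unfolding conj_ord_def
        proof
          fix s assume s: "s \<in> S"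
          have "le s (d2 s) z" using z s unfolding conj_ord_def by blast
          moreover have "d2 s \<in> X" "z \<in> X" "y \<in> X" using d2 s z DX y IX by auto
          ultimately show "le s y z" using trans[OF s, of y "d2 s" z] d2 s by blast
        qed
        ultimately show "\<exists>z\<in>I. conj_ord S le x z \<and> conj_ord S le y z" using z DI by blast
      qed
    qed
  qed
qed

end
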